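(* Let $E$ be a finite set and let $S$ be a powerful multiset over $E$ with indicator function $f:2^E\to\mathbb{Z}_{\ge0}$ (with $f(\emptyset)\neq 0$). Then for every $X\subseteq E$, $f(\emptyset)$ divides $f(X)$.
   Context: A multiset over $E$ is a collection of subsets of $E$ with repetition; its indicator function $f$ assigns to each $X\subseteq E$ its multiplicity. Assuming $f(\emptyset)\neq 0$, its rank function is $r_S(X)=\log_2\Big(\sum_{Y\subseteq E} f(Y)\big/\sum_{Y\subseteq E\setminus X} f(Y)\Big)$, and $S$ is a powerful multiset if $r_S(X)$ is an integer for every $X\subseteq E$. *)

theory Defs
  imports Complex_Main
begin

text \<open>A multiset S of subsets of a finite ground set E is represented by its indicator
  function f (multiplicity of each subset Y of E).  Only subsets of E are summed over.\<close>

definition ms_rank :: "'a set \<Rightarrow> ('a set \<Rightarrow> nat) \<Rightarrow> 'a set \<Rightarrow> real" where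
  "ms_rank E f X =
     log 2 (real (\<Sum>Y\<in>Pow E. f Y) / real (\<Sum>Y\<in>Pow (E - X). f Y))"

definition powerful :: "'a set \<Rightarrow> ('a set \<Rightarrow> nat) \<Rightarrow> bool" where
  "powerful E f \<longleftrightarrow> (\<forall>X. X \<subseteq> E \<longrightarrow> ms_rank E f X \<in> \<int>)"

end

theory Submission
  imports Defs
begin

lemma l1: "Pow A = insert A {Y. Y \<subset> A}" by blast
lemma l2: "finite A \<Longrightarrow> finite {Y. Y \<subset> A}" by (rule finite_subset[of _ "Pow A"]) auto
lemma l3: "finite A \<Longrightarrow> sum f (Pow A) = f A + (\<Sum>Y\<in>{Y. Y \<subset> A}. f Y)"
  by (subst l1, rule sum.insert[OF l2]) auto

lemma aux: "(x::real) = a / b \<Longrightarrow> b > 0 \<Longrightarrow> x = 2 ^ n \<Longrightarrow> a = b * 2 ^ n"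
  by (simp add: field_simps)

lemma rank_pow:
  fixes E :: "'a set" and f :: "'a set \<Rightarrow> nat"
  assumes fin: "finite E" and f0: "f {} \<noteq> 0" and pw: "powerful E f" and X: "X \<subseteq> E"
  shows "\<exists>k::nat. (\<Sum>Y\<in>Pow E. f Y) = (\<Sum>Y\<in>Pow (E - X). f Y) * 2 ^ k"
proof -
  let ?N = "(\<Sum>Y\<in>Pow E. f Y)" and ?g = "(\<Sum>Y\<in>Pow (E - X). f Y)"
  have "f {} \<le> ?g"
    using fin by (intro member_le_sum) auto
  hence gpos: "?g > 0" using f0 by linarith
  have "?g \<le> ?N"
    using fin by (intro sum_mono2) auto
  obtain z where z: "ms_rank E f X = of_int z" using pw X unfolding powerful_def Ints_def by blast
  define x where "x = real ?N / real ?g"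
  have r1: "real ?g \<le> real ?N" using \<open>?g \<le> ?N\<close> by (simp only: of_nat_le_iff)
  have r2: "real ?g > 0" using gpos by (simp only: of_nat_0_less_iff)
  have xge: "x \<ge> 1" unfolding x_def using r1 r2 by (simp only: le_divide_eq_1) simp
  have x2: "x = 2 powr (real_of_int z)"
    using z xge unfolding ms_rank_def x_def[symmetric]
    by (metis less_le_trans powr_log_cancel one_less_numeral_iff semiring_norm(76) zero_less_one less_numeral_extra(4) order.strict_iff_not)
  have "z \<ge> 0"
  proof (rule ccontr)
    assume "\<not> z \<ge> 0"
    hence "2 powr (real_of_int z) < 2 powr 0" by (intro powr_less_mono) auto
    thus False using x2 xge by simp
  qed
  hence "x = 2 ^ nat z" using x2 by (simp add: powr_realpow[symmetric])
  hence "real ?N = real ?g * 2 ^ nat z" by (rule aux[OF x_def r2])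
  hence "real ?N = real (?g * 2 ^ nat z)" by (simp only: of_nat_mult of_nat_power of_nat_numeral)
  hence "?N = ?g * 2 ^ nat z" by (simp only: of_nat_eq_iff)
  thus ?thesis by blast
qed

lemma h_dvd:
  fixes E :: "'a set" and f :: "'a set \<Rightarrow> nat"
  assumes fin: "finite E" and f0: "f {} \<noteq> 0" and pw: "powerful E f" and A: "A \<subseteq> E"
  shows "f {} dvd (\<Sum>Y\<in>Pow A. f Y)"
proof -
  have eA: "E - (E - A) = A" using A by blast
  obtain k where k: "(\<Sum>Y\<in>Pow E. f Y) = (\<Sum>Y\<in>Pow A. f Y) * 2 ^ k"
    using rank_pow[OF fin f0 pw, of "E - A"] eA by auto
  obtain m where m: "(\<Sum>Y\<in>Pow E. f Y) = f {} * 2 ^ m"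
    using rank_pow[OF fin f0 pw, of E] by auto
  have "f {} \<le> (\<Sum>Y\<in>Pow A. f Y)"
    using finite_subset[OF A fin] by (intro member_le_sum) auto
  hence "f {} * 2 ^ k \<le> f {} * 2 ^ m" using k m by (metis mult_le_mono1)
  hence "(2::nat) ^ k \<le> 2 ^ m" using f0 by simp
  hence "k \<le> m" by simp
  hence "(2::nat) ^ m = 2 ^ k * 2 ^ (m - k)" by (simp add: power_add[symmetric])
  hence "(\<Sum>Y\<in>Pow A. f Y) * 2 ^ k = (f {} * 2 ^ (m - k)) * 2 ^ k" using k m by simp
  hence "(\<Sum>Y\<in>Pow A. f Y) = f {} * 2 ^ (m - k)" by simp
  thus ?thesis by simp
qed

theorem theorem5:
  fixes E :: "'a set" and f :: "'a set \<Rightarrow> nat"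
  assumes "finite E"
    and "f {} \<noteq> 0"
    and "powerful E f"
    and "X \<subseteq> E"
  shows "f {} dvd f X"
  using finite_subset[OF assms(4) assms(1)] assms(4)
proof (induction X rule: finite_psubset_induct)
  case (psubset A)
  show ?case
  proof -
    have finA: "finite A" using psubset.hyps .
    have "(\<Sum>Y\<in>Pow A. f Y) = f A + (\<Sum>Y\<in>{Y. Y \<subset> A}. f Y)" using l3[OF finA] .
    moreover have "f {} dvd (\<Sum>Y\<in>{Y. Y \<subset> A}. f Y)"
    proof (rule dvd_sum)
      fix Y assume "Y \<in> {Y. Y \<subset> A}"
      hence "Y \<subset> A" by simp
      moreover have "Y \<subseteq> E" using \<open>Y \<subset> A\<close> psubset.prems by blast
      ultimately show "f {} dvd f Y" by (rule psubset.IH)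
    qed
    moreover have "f {} dvd (\<Sum>Y\<in>Pow A. f Y)" using h_dvd[OF assms(1-3) psubset.prems] .
    ultimately show ?thesis by (simp add: dvd_add_left_iff)
  qed
qed

end
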